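(* Let $C$ be a linear code over $\mathbb{Z}_4+u\mathbb{Z}_4$ of length $n$, let $D$ be a non-zero linear code over $\mathbb{Z}_4$ and $E$ a non-zero linear code over $\mathbb{F}_2+u\mathbb{F}_2$ such that $\mu(C)=D$ and $\alpha(C)=E$. Let $d,d',d''$ denote the minimum Lee weights of $C$, $D$ and $E$ respectively. Then $d\le 2d'$ and $d\le 2d''$.
   Context: $\mathbb{Z}_4+u\mathbb{Z}_4$ is the commutative ring of characteristic $4$ with $u^2=0$; $\mathbb{F}_2+u\mathbb{F}_2$ is the commutative ring $\{0,1,u,1+u\}$ of characteristic $2$ with $u^2=0$. A linear code over a ring $R$ is an $R$-submodule of $R^n$. Lee weights: on $\mathbb{Z}_4$, $w_L(0)=0,w_L(1)=w_L(3)=1,w_L(2)=2$; on $\mathbb{Z}_4+u\mathbb{Z}_4$, $w_L(a+ub)=w_L(b)+w_L(a+b)$; on $\mathbb{F}_2+u\mathbb{F}_2$, $w_L(0)=0$, $w_L(1)=w_L(1+u)=1$, $w_L(u)=2$; all extended additively to vectors; minimum Lee weight is the minimum over nonzero codewords. For $\overline{a},\overline{b}\in\mathbb{Z}_4^n$, $\mu(\overline{a}+u\overline{b})=\overline{a}$; $\alpha$ is coordinatewise reduction modulo $2$ from $\mathbb{Z}_4+u\mathbb{Z}_4$ to $\mathbb{F}_2+u\mathbb{F}_2$. *)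

theory Defs
  imports Main "HOL-Library.Numeral_Type"
begin

text \<open>Z4 is the type 4 (integers mod 4), F2 is the type 2.
  An element a + u b of Z4 + uZ4 is the pair (a,b) :: 4 \<times> 4;
  an element a + u b of F2 + uF2 is the pair (a,b) :: 2 \<times> 2.
  Vectors of length n are functions from a finite index type 'n (with n = CARD('n)).\<close>

definition mult_ZU :: "4 \<times> 4 \<Rightarrow> 4 \<times> 4 \<Rightarrow> 4 \<times> 4" where
  "mult_ZU x y = (fst x * fst y, fst x * snd y + snd x * fst y)"

definition mult_FU :: "2 \<times> 2 \<Rightarrow> 2 \<times> 2 \<Rightarrow> 2 \<times> 2" where
  "mult_FU x y = (fst x * fst y, fst x * snd y + snd x * fst y)"

definition add_pair :: "'a::plus \<times> 'a \<Rightarrow> 'a \<times> 'a \<Rightarrow> 'a \<times> 'a" where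
  "add_pair x y = (fst x + fst y, snd x + snd y)"

definition linear_code_Z4 :: "('n::finite \<Rightarrow> 4) set \<Rightarrow> bool" where
  "linear_code_Z4 C \<longleftrightarrow> (\<lambda>i. 0) \<in> C \<and> (\<forall>x\<in>C. \<forall>y\<in>C. (\<lambda>i. x i + y i) \<in> C)
     \<and> (\<forall>r x. x \<in> C \<longrightarrow> (\<lambda>i. r * x i) \<in> C)"

definition linear_code_ZU :: "('n::finite \<Rightarrow> 4 \<times> 4) set \<Rightarrow> bool" where
  "linear_code_ZU C \<longleftrightarrow> (\<lambda>i. (0,0)) \<in> C \<and> (\<forall>x\<in>C. \<forall>y\<in>C. (\<lambda>i. add_pair (x i) (y i)) \<in> C)
     \<and> (\<forall>r x. x \<in> C \<longrightarrow> (\<lambda>i. mult_ZU r (x i)) \<in> C)"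

definition linear_code_FU :: "('n::finite \<Rightarrow> 2 \<times> 2) set \<Rightarrow> bool" where
  "linear_code_FU C \<longleftrightarrow> (\<lambda>i. (0,0)) \<in> C \<and> (\<forall>x\<in>C. \<forall>y\<in>C. (\<lambda>i. add_pair (x i) (y i)) \<in> C)
     \<and> (\<forall>r x. x \<in> C \<longrightarrow> (\<lambda>i. mult_FU r (x i)) \<in> C)"

definition lee_Z4 :: "4 \<Rightarrow> nat" where
  "lee_Z4 x = (if x = 0 then 0 else if x = 2 then 2 else 1)"

definition lee_ZU :: "4 \<times> 4 \<Rightarrow> nat" where
  "lee_ZU x = lee_Z4 (snd x) + lee_Z4 (fst x + snd x)"

definition lee_FU :: "2 \<times> 2 \<Rightarrow> nat" where
  "lee_FU x = (if fst x = 0 then (if snd x = 0 then 0 else 2) else 1)"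

definition vec_weight :: "('a \<Rightarrow> nat) \<Rightarrow> ('n::finite \<Rightarrow> 'a) \<Rightarrow> nat" where
  "vec_weight w v = (\<Sum>i\<in>UNIV. w (v i))"

definition min_weight :: "('a \<Rightarrow> nat) \<Rightarrow> 'a \<Rightarrow> ('n::finite \<Rightarrow> 'a) set \<Rightarrow> nat" where
  "min_weight w z C = Min {vec_weight w v | v. v \<in> C \<and> v \<noteq> (\<lambda>i. z)}"

definition mu :: "('n \<Rightarrow> 4 \<times> 4) \<Rightarrow> ('n \<Rightarrow> 4)" where
  "mu v = (\<lambda>i. fst (v i))"

definition red2 :: "4 \<Rightarrow> 2" where
  "red2 x = (if x = 0 \<or> x = 2 then 0 else 1)"

definition alpha :: "('n \<Rightarrow> 4 \<times> 4) \<Rightarrow> ('n \<Rightarrow> 2 \<times> 2)" where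
  "alpha v = (\<lambda>i. (red2 (fst (v i)), red2 (snd (v i))))"

end

theory Submission
  imports Defs
begin

lemma ex4: "(x::4) = 0 \<or> x = 1 \<or> x = 2 \<or> x = 3"
proof (induct x)
  case (of_int z)
  then have "z = 0 \<or> z = 1 \<or> z = 2 \<or> z = 3" by auto
  then show ?case by auto
qed

lemma ex2: "(x::2) = 0 \<or> x = 1"
proof (induct x)
  case (of_int z)
  then have "z = 0 \<or> z = 1" by auto
  then show ?case by auto
qed

lemma lee_u: "lee_ZU (mult_ZU (0,1) x) = 2 * lee_Z4 (fst x)"
  by (simp add: lee_ZU_def mult_ZU_def)

lemma lee_2: "lee_ZU (mult_ZU (2,0) x) = 2 * lee_FU (red2 (fst x), red2 (snd x))"
proof -
  obtain a b where x: "x = (a,b)" by (cases x)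
  show ?thesis using ex4[of a] ex4[of b]
    by (elim disjE) (simp_all add: x lee_ZU_def mult_ZU_def lee_Z4_def lee_FU_def red2_def)
qed

lemma min_le:
  fixes C :: "('n::finite \<Rightarrow> 'a::finite) set"
  assumes "v \<in> C" "v \<noteq> (\<lambda>i. z)"
  shows "min_weight w z C \<le> vec_weight w v"
  unfolding min_weight_def
  by (rule Min_le) (use assms finite_image_set[of "\<lambda>v. v \<in> C \<and> v \<noteq> (\<lambda>i. z)" "vec_weight w"] in auto)

lemma min_in:
  fixes C :: "('n::finite \<Rightarrow> 'a::finite) set"
  assumes "v \<in> C" "v \<noteq> (\<lambda>i. z)"
  obtains a where "a \<in> C" "a \<noteq> (\<lambda>i. z)" "min_weight w z C = vec_weight w a"
proof -
  have "min_weight w z C \<in> {vec_weight w v | v. v \<in> C \<and> v \<noteq> (\<lambda>i. z)}"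
    unfolding min_weight_def by (rule Min_in) (use assms finite_image_set[of "\<lambda>v. v \<in> C \<and> v \<noteq> (\<lambda>i. z)" "vec_weight w"] in auto)
  then show ?thesis using that by auto
qed

theorem theorem4p6:
  fixes C :: "('n::finite \<Rightarrow> 4 \<times> 4) set"
    and D :: "('n \<Rightarrow> 4) set"
    and E :: "('n \<Rightarrow> 2 \<times> 2) set"
  assumes "linear_code_ZU C"
    and "linear_code_Z4 D" and "D \<noteq> {\<lambda>i. 0}"
    and "linear_code_FU E" and "E \<noteq> {\<lambda>i. (0,0)}"
    and "mu ` C = D" and "alpha ` C = E"
  shows "min_weight lee_ZU (0,0) C \<le> 2 * min_weight lee_Z4 0 D
       \<and> min_weight lee_ZU (0,0) C \<le> 2 * min_weight lee_FU (0,0) E"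
proof
  have sc: "\<And>r x. x \<in> C \<Longrightarrow> (\<lambda>i. mult_ZU r (x i)) \<in> C"
    using assms(1) unfolding linear_code_ZU_def by blast
  obtain d where d: "d \<in> D" "d \<noteq> (\<lambda>i. 0)"
    using assms(2,3) unfolding linear_code_Z4_def by blast
  then obtain a where a: "a \<in> D" "a \<noteq> (\<lambda>i. 0)" "min_weight lee_Z4 0 D = vec_weight lee_Z4 a"
    by (rule min_in)
  then obtain c where c: "c \<in> C" "mu c = a" using assms(6) by blast
  let ?v = "\<lambda>i. mult_ZU (0,1) (c i)"
  have "?v \<in> C" using sc c by blast
  moreover have "?v \<noteq> (\<lambda>i. (0,0))"
  proof
    assume h: "?v = (\<lambda>i. (0,0))"
    have "a = (\<lambda>i. 0)"
    proof
      fix i have "?v i = (0,0)" using fun_cong[OF h, of i] by simp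
      then show "a i = 0" using c(2) by (auto simp add: mult_ZU_def mu_def)
    qed
    then show False using a by simp
  qed
  ultimately have "min_weight lee_ZU (0,0) C \<le> vec_weight lee_ZU ?v" by (rule min_le)
  also have "\<dots> = 2 * vec_weight lee_Z4 a"
    unfolding c(2)[symmetric] by (simp add: vec_weight_def lee_u mu_def sum_distrib_left)
  finally show "min_weight lee_ZU (0,0) C \<le> 2 * min_weight lee_Z4 0 D" using a by simp
next
  have sc: "\<And>r x. x \<in> C \<Longrightarrow> (\<lambda>i. mult_ZU r (x i)) \<in> C"
    using assms(1) unfolding linear_code_ZU_def by blast
  obtain d where d: "d \<in> E" "d \<noteq> (\<lambda>i. (0,0))"
    using assms(4,5) unfolding linear_code_FU_def by blast
  then obtain a where a: "a \<in> E" "a \<noteq> (\<lambda>i. (0,0))" "min_weight lee_FU (0,0) E = vec_weight lee_FU a"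
    by (rule min_in)
  then obtain c where c: "c \<in> C" "alpha c = a" using assms(7) by blast
  let ?v = "\<lambda>i. mult_ZU (2,0) (c i)"
  have "?v \<in> C" using sc c by blast
  moreover have wv: "vec_weight lee_ZU ?v = 2 * vec_weight lee_FU a"
    unfolding c(2)[symmetric] by (simp add: vec_weight_def lee_2 alpha_def sum_distrib_left)
  moreover have "?v \<noteq> (\<lambda>i. (0,0))"
  proof
    assume h: "?v = (\<lambda>i. (0,0))"
    obtain i where "a i \<noteq> (0,0)" using a(2) by auto
    moreover have "lee_FU (a i) \<noteq> 0 \<Longrightarrow> False"
    proof -
      assume "lee_FU (a i) \<noteq> 0"
      have "lee_ZU (?v i) = 2 * lee_FU (a i)" unfolding c(2)[symmetric] by (simp add: lee_2 alpha_def)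
      moreover have "?v i = (0,0)" using fun_cong[OF h, of i] by simp
      ultimately show False using \<open>lee_FU (a i) \<noteq> 0\<close> by (simp add: lee_ZU_def lee_Z4_def)
    qed
    moreover have "\<And>x. x \<noteq> (0,0) \<Longrightarrow> lee_FU x \<noteq> 0"
      by (simp add: lee_FU_def prod_eq_iff)
    ultimately show False by blast
  qed
  ultimately have "min_weight lee_ZU (0,0) C \<le> vec_weight lee_ZU ?v" by (intro min_le)
  then show "min_weight lee_ZU (0,0) C \<le> 2 * min_weight lee_FU (0,0) E" using a wv by simp
qed

end
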